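(* Assume the linear model $X_a=X^a\theta^0_a+\epsilon_a$ and that $S_0$ satisfies the $\Delta$-compatibility condition for some $\Delta>0$ with constant $\phi_{0,a}>0$. Then on the event $\Lambda_a$, for $\lambda\ge2\lambda_0$, $\mu\ge2\mu_0$ and $\lambda\ge(3+\frac{14}{\Delta})B\mu$, $$\frac1n\|X^a(\hat\theta^{\lambda,\mu}_a-\theta^0_a)\|_2^2+(\lambda-3B\mu)\|\hat\theta^{\lambda,\mu}_a-\theta^0_a\|_1\le\frac{s_0(2\lambda+B\mu)^2}{\phi_{0,a}^2}.$$
   Context: Fix a node $a$. $X_a\in\mathbb{R}^n$ is the observed $a$-th variable, $X^a$ the $n\times p$ observation matrix with $a$-th column set to zero, $X^a_j$ its $j$-th column, $\theta^0_a$ the true coefficient vector, $\epsilon_a$ the noise. $S_0=\{j:\theta^0_{a,j}\neq0\}$, $s_0=|S_0|$. For $S\subseteq\{1,\dots,p\}$, $\theta_S$ has entries $\theta_j\mathbf{1}\{j\in S\}$ and $\theta_{S^c}$ entries $\theta_j\mathbf{1}\{j\notin S\}$. The local difference matrix $D^a$: from a known local neighborhood graph with edge set $E_{\rm local}$, $D$ has a row $e_i-e_j$ per edge $\{i,j\}$, $i<j$; $D^a$ keeps rows with $a$-th entry $0$. $B$ bounds the number of nonzero entries in any column of $D^a$. $\hat\theta^{\lambda,\mu}_a=\operatorname{argmin}_{\theta_a}\big[\frac1n\|X_a-X^a\theta_a\|_2^2+\lambda\|\theta_a\|_1+\mu\|D^a\theta_a\|_1\big]$. For $\lambda_0,\mu_0>0$,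 $\Lambda_a:=\{\max_{j\neq a}\frac2n|\epsilon_a'X^a_j|\le\lambda_0+B\mu_0\}$. $\Delta$-compatibility condition: for all $\theta\in\mathbb{R}^p$ with $\|\theta_{S_0^c}\|_1\le(3+\Delta)\|\theta_{S_0}\|_1$ one has $\|\theta_{S_0}\|_1^2\le\frac{s_0\,\theta'X^{a\prime}X^a\theta}{n\phi_{0,a}^2}$. *)

theory Defs
  imports "HOL-Analysis.Analysis"
begin

text \<open>Rows of observations indexed by the finite type 'n (so n = CARD('n)),
variables indexed by the finite linearly ordered type 'p (so p = CARD('p)).\<close>

definition l1norm :: "real^'p \<Rightarrow> real" where
  "l1norm v = (\<Sum>j\<in>UNIV. \<bar>v $ j\<bar>)"

definition restrict_vec :: "'p set \<Rightarrow> real^'p \<Rightarrow> real^'p" where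
  "restrict_vec S v = (\<chi> j. if j \<in> S then v $ j else 0)"

definition obs_col :: "real^'p^'n \<Rightarrow> 'p \<Rightarrow> real^'n" where
  "obs_col X a = (\<chi> i. X $ i $ a)"

definition obs_minus :: "real^'p^'n \<Rightarrow> 'p \<Rightarrow> real^'p^'n" where
  "obs_minus X a = (\<chi> i k. if k = a then 0 else X $ i $ k)"

definition Drow :: "'p \<times> 'p \<Rightarrow> real^'p" where
  "Drow e = axis (fst e) 1 - axis (snd e) 1"

text \<open>Rows kept in D^a: edges whose row has a-th entry 0.\<close>
definition local_edges :: "('p::finite \<times> 'p) set \<Rightarrow> 'p \<Rightarrow> ('p \<times> 'p) set" where
  "local_edges E a = {e \<in> E. Drow e $ a = 0}"

definition Dnorm :: "('p::finite \<times> 'p) set \<Rightarrow> 'p \<Rightarrow> real^'p \<Rightarrow> real" where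
  "Dnorm E a v = (\<Sum>e\<in>local_edges E a. \<bar>Drow e \<bullet> v\<bar>)"

definition objective :: "real^'p^'n \<Rightarrow> 'p \<Rightarrow> ('p::finite \<times> 'p) set \<Rightarrow> real \<Rightarrow> real \<Rightarrow> real^'p \<Rightarrow> real" where
  "objective X a E lam mu v =
     (1 / real CARD('n)) * (norm (obs_col X a - obs_minus X a *v v))\<^sup>2
     + lam * l1norm v + mu * Dnorm E a v"

definition compatible :: "real^'p^'n \<Rightarrow> 'p \<Rightarrow> 'p set \<Rightarrow> real \<Rightarrow> real \<Rightarrow> bool" where
  "compatible X a S0 Delta phi \<longleftrightarrow>
     (\<forall>v::real^'p. l1norm (restrict_vec (- S0) v) \<le> (3 + Delta) * l1norm (restrict_vec S0 v) \<longrightarrow>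
        (l1norm (restrict_vec S0 v))\<^sup>2 \<le>
          real (card S0) * ((obs_minus X a *v v) \<bullet> (obs_minus X a *v v)) / (real CARD('n) * phi\<^sup>2))"

end

theory Submission imports Defs begin

lemma inner_mv: "(e::real^'n::finite) \<bullet> (A *v x) = (\<Sum>j\<in>UNIV. (x::real^'m::finite)$j * (e \<bullet> column j A))"
  unfolding inner_vec_def matrix_vector_mult_def column_def
  apply (simp add: sum_distrib_left)
  apply (subst sum.swap)
  apply (simp add: algebra_simps)
  done

lemma l1_split: "l1norm v = l1norm (restrict_vec S v) + l1norm (restrict_vec (-S) v)"
  unfolding l1norm_def restrict_vec_def
  by (subst sum.distrib[symmetric]) (rule sum.cong, auto)

lemma Drow_abs: "\<bar>Drow e $ j\<bar> \<le> 1"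
  unfolding Drow_def axis_def by auto

lemma Drow_inner_le: "\<bar>Drow e \<bullet> v\<bar> \<le> (\<Sum>j\<in>UNIV. \<bar>Drow e $ j\<bar> * \<bar>v $ j\<bar>)"
  unfolding inner_vec_def
  by (rule order_trans[OF sum_abs]) (simp add: abs_mult)

lemma Dnorm_lip:
  fixes E :: "('p::finite \<times> 'p) set"
  assumes B: "\<forall>j. card {e \<in> local_edges E a. Drow e $ j \<noteq> 0} \<le> B"
  shows "Dnorm E a v \<le> Dnorm E a w + real B * l1norm (v - w)"
proof -
  let ?L = "local_edges E a"
  have fin: "finite ?L" by simp
  have "Dnorm E a v \<le> (\<Sum>e\<in>?L. \<bar>Drow e \<bullet> w\<bar> + \<bar>Drow e \<bullet> (v - w)\<bar>)"
    unfolding Dnorm_def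
    by (rule sum_mono) (metis abs_triangle_ineq add.commute diff_add_cancel inner_diff_right)
  also have "\<dots> = Dnorm E a w + (\<Sum>e\<in>?L. \<bar>Drow e \<bullet> (v - w)\<bar>)"
    unfolding Dnorm_def by (simp add: sum.distrib)
  also have "(\<Sum>e\<in>?L. \<bar>Drow e \<bullet> (v - w)\<bar>) \<le> (\<Sum>e\<in>?L. \<Sum>j\<in>UNIV. \<bar>Drow e $ j\<bar> * \<bar>(v-w) $ j\<bar>)"
    by (rule sum_mono) (rule Drow_inner_le)
  also have "\<dots> = (\<Sum>j\<in>UNIV. \<bar>(v-w) $ j\<bar> * (\<Sum>e\<in>?L. \<bar>Drow e $ j\<bar>))"
    apply (subst sum.swap)
    apply (simp add: sum_distrib_left mult.commute)
    done
  also have "\<dots> \<le> (\<Sum>j\<in>UNIV. \<bar>(v-w) $ j\<bar> * real B)"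
  proof (rule sum_mono, rule mult_left_mono)
    fix j
    have "(\<Sum>e\<in>?L. \<bar>Drow e $ j\<bar>) \<le> (\<Sum>e\<in>?L. if Drow e $ j \<noteq> 0 then 1 else 0)"
      by (rule sum_mono) (use Drow_abs in auto)
    also have "\<dots> = real (card {e \<in> ?L. Drow e $ j \<noteq> 0})"
      by (simp add: sum.inter_filter[OF fin, symmetric])
    also have "\<dots> \<le> real B" using B by simp
    finally show "(\<Sum>e\<in>?L. \<bar>Drow e $ j\<bar>) \<le> real B" .
  qed simp
  also have "\<dots> = real B * l1norm (v - w)"
    unfolding l1norm_def by (subst sum_distrib_left) (simp add: mult_ac)
  finally show ?thesis by simp
qed

lemma key_alg:
  fixes A h dh N t0 d0 LL LS LC l m b :: real
  assumes "A + l * h + m * dh \<le> N + l * t0 + m * d0"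
    and "2 * N \<le> (l + b * m) * LL"
    and "m * d0 \<le> m * dh + m * b * LL"
    and "l * h \<ge> l * t0 - l * LS + l * LC"
    and "LL = LS + LC"
  shows "2 * A + (l - 3 * b * m) * LC \<le> (3 * l + 3 * b * m) * LS"
proof -
  have "2 * N \<le> l * LS + l * LC + b * m * LS + b * m * LC"
    using assms(2) unfolding assms(5) by (simp add: algebra_simps)
  moreover have "m * d0 \<le> m * dh + b * m * LS + b * m * LC"
    using assms(3) unfolding assms(5) by (simp add: algebra_simps)
  ultimately show ?thesis using assms(1,4) by (simp add: algebra_simps)
qed

theorem mainTheorem13:
  fixes a :: "'p::{finite,linorder}"
    and X :: "((real, 'p) vec, 'n::finite) vec"
    and theta0 :: "(real, 'p) vec" and eps :: "(real, 'n) vec"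
    and E :: "('p \<times> 'p) set" and B :: nat
    and lam0 mu0 lam mu Delta phi :: real
    and thetahat :: "(real, 'p) vec"
  assumes edges: "\<forall>(i, j)\<in>E. i < j"
    and B_bound: "\<forall>j. card {e \<in> local_edges E a. Drow e $ j \<noteq> 0} \<le> B"
    and model: "obs_col X a = obs_minus X a *v theta0 + eps"
    and Delta_pos: "Delta > 0" and phi_pos: "phi > 0"
    and compat: "compatible X a {j. theta0 $ j \<noteq> 0} Delta phi"
    and lam0_pos: "lam0 > 0" and mu0_pos: "mu0 > 0"
    and event: "\<forall>j. j \<noteq> a \<longrightarrow>
        2 / real CARD('n) * \<bar>eps \<bullet> column j (obs_minus X a)\<bar> \<le> lam0 + real B * mu0"
    and lam_ge: "lam \<ge> 2 * lam0" and mu_ge: "mu \<ge> 2 * mu0"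
    and lam_ge2: "lam \<ge> (3 + 14 / Delta) * real B * mu"
    and minimizer: "\<forall>v. objective X a E lam mu thetahat \<le> objective X a E lam mu v"
  shows "(1 / real CARD('n)) * (norm (obs_minus X a *v (thetahat - theta0)))\<^sup>2
           + (lam - 3 * real B * mu) * l1norm (thetahat - theta0)
         \<le> real (card {j. theta0 $ j \<noteq> 0}) * (2 * lam + real B * mu)\<^sup>2 / phi\<^sup>2"
proof -
  let ?n = "real CARD('n)"
  let ?XA = "obs_minus X a"
  define D where "D = thetahat - theta0"
  define S where "S = {j. theta0 $ j \<noteq> 0}"
  define A where "A = (1 / ?n) * (norm (?XA *v D))\<^sup>2"
  define L where "L = l1norm D"
  define LS where "LS = l1norm (restrict_vec S D)"
  define LC where "LC = l1norm (restrict_vec (-S) D)"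
  define s where "s = real (card S)"
  have npos: "?n > 0" by simp
  have mupos: "mu > 0" using mu_ge mu0_pos by linarith
  have Bge: "real B \<ge> 0" by simp
  have A_ge: "A \<ge> 0" unfolding A_def by simp
  have LS_ge: "LS \<ge> 0" unfolding LS_def l1norm_def by (simp add: sum_nonneg)
  have LC_ge: "LC \<ge> 0" unfolding LC_def l1norm_def by (simp add: sum_nonneg)
  have L_split: "L = LS + LC" unfolding L_def LS_def LC_def by (rule l1_split)
  have s_ge: "s \<ge> 0" unfolding s_def by simp
  have noise: "2 / ?n * \<bar>eps \<bullet> (?XA *v D)\<bar> \<le> (lam0 + real B * mu0) * L"
  proof -
    have "\<bar>eps \<bullet> (?XA *v D)\<bar> \<le> (\<Sum>j\<in>UNIV. \<bar>D $ j\<bar> * \<bar>eps \<bullet> column j ?XA\<bar>)"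
      unfolding inner_mv by (rule order_trans[OF sum_abs]) (simp add: abs_mult)
    also have "\<dots> \<le> (\<Sum>j\<in>UNIV. \<bar>D $ j\<bar> * (?n / 2 * (lam0 + real B * mu0)))"
    proof (rule sum_mono, rule mult_left_mono)
      fix j
      show "\<bar>eps \<bullet> column j ?XA\<bar> \<le> ?n / 2 * (lam0 + real B * mu0)"
      proof (cases "j = a")
        case True
        have "column j ?XA = 0" unfolding True column_def obs_minus_def
          by (simp add: vec_eq_iff)
        then show ?thesis using lam0_pos mu0_pos by simp
      next
        case False
        then have "2 / ?n * \<bar>eps \<bullet> column j ?XA\<bar> \<le> lam0 + real B * mu0" using event by blast
        then show ?thesis using npos by (simp add: field_simps)
      qed
    qed simp
    also have "\<dots> = ?n / 2 * (lam0 + real B * mu0) * L"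
      unfolding L_def l1norm_def by (subst sum_distrib_left) (simp add: mult_ac)
    finally show ?thesis using npos by (simp add: field_simps)
  qed
  have noise2: "2 / ?n * (eps \<bullet> (?XA *v D)) \<le> (lam / 2 + real B * mu / 2) * L"
  proof -
    have "2 / ?n * (eps \<bullet> (?XA *v D)) \<le> 2 / ?n * \<bar>eps \<bullet> (?XA *v D)\<bar>"
      using npos by (intro mult_left_mono) auto
    also have "\<dots> \<le> (lam0 + real B * mu0) * L" by (rule noise)
    also have "\<dots> \<le> (lam / 2 + real B * mu / 2) * L"
      apply (rule mult_right_mono)
      using lam_ge mu_ge Bge mult_left_mono[OF mu_ge Bge]
      apply linarith
      unfolding L_def l1norm_def by (simp add: sum_nonneg)
    finally show ?thesis .
  qed
  have res: "obs_col X a - ?XA *v thetahat = eps - ?XA *v D"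
    unfolding model D_def by (simp add: matrix_vector_mult_diff_distrib)
  have sq: "(norm (eps - ?XA *v D))\<^sup>2 = (norm eps)\<^sup>2 - 2 * (eps \<bullet> (?XA *v D)) + (norm (?XA *v D))\<^sup>2"
    by (simp add: power2_norm_eq_inner inner_diff_left inner_diff_right inner_commute)
  have res0: "obs_col X a - ?XA *v theta0 = eps" unfolding model by simp
  have objhat: "objective X a E lam mu thetahat = (1 / ?n) * (norm eps)\<^sup>2 - 2 / ?n * (eps \<bullet> (?XA *v D)) + A
      + lam * l1norm thetahat + mu * Dnorm E a thetahat"
    unfolding objective_def res sq A_def by (simp add: field_simps)
  have obj0: "objective X a E lam mu theta0 = (1 / ?n) * (norm eps)\<^sup>2 + lam * l1norm theta0 + mu * Dnorm E a theta0"
    unfolding objective_def res0 by simp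
  have basic: "A + lam * l1norm thetahat + mu * Dnorm E a thetahat
      \<le> 2 / ?n * (eps \<bullet> (?XA *v D)) + lam * l1norm theta0 + mu * Dnorm E a theta0"
    using minimizer[rule_format, of theta0] objhat obj0 by linarith
  have Dl: "Dnorm E a theta0 \<le> Dnorm E a thetahat + real B * L"
  proof -
    have "l1norm (theta0 - thetahat) = L"
      unfolding L_def D_def l1norm_def by (simp add: abs_minus_commute)
    then show ?thesis using Dnorm_lip[OF B_bound, of theta0 thetahat] by simp
  qed
  have Dl2: "mu * Dnorm E a theta0 \<le> mu * Dnorm E a thetahat + mu * real B * L"
    using mult_left_mono[OF Dl, of mu] mupos by (simp add: algebra_simps)
  have l1hat: "l1norm thetahat \<ge> l1norm theta0 - LS + LC"
  proof -
    have "l1norm theta0 - LS + LC = (\<Sum>j\<in>UNIV. \<bar>theta0 $ j\<bar> - (if j \<in> S then \<bar>D $ j\<bar> else 0) + (if j \<in> -S then \<bar>D $ j\<bar> else 0))"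
    proof -
      have eS: "LS = (\<Sum>j\<in>UNIV. if j \<in> S then \<bar>D $ j\<bar> else 0)"
        unfolding LS_def l1norm_def restrict_vec_def by (rule sum.cong) auto
      have eC: "LC = (\<Sum>j\<in>UNIV. if j \<in> -S then \<bar>D $ j\<bar> else 0)"
        unfolding LC_def l1norm_def restrict_vec_def by (rule sum.cong) auto
      show ?thesis unfolding eS eC l1norm_def by (simp only: sum.distrib sum_subtractf)
    qed
    also have "\<dots> \<le> l1norm thetahat"
      unfolding l1norm_def
    proof (rule sum_mono)
      fix j
      show "\<bar>theta0 $ j\<bar> - (if j \<in> S then \<bar>D $ j\<bar> else 0) + (if j \<in> -S then \<bar>D $ j\<bar> else 0) \<le> \<bar>thetahat $ j\<bar>"
        unfolding D_def S_def by auto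
    qed
    finally show ?thesis by simp
  qed
  have l1hat2: "lam * l1norm thetahat \<ge> lam * l1norm theta0 - lam * LS + lam * LC"
    using mult_left_mono[OF l1hat, of lam] lam_ge lam0_pos by (simp add: algebra_simps)
  have key: "2 * A + (lam - 3 * real B * mu) * LC \<le> (3 * lam + 3 * real B * mu) * LS"
    by (rule key_alg[OF basic _ Dl2 l1hat2 L_split]) (use noise2 in \<open>simp add: algebra_simps\<close>)
  have lamB: "lam - 3 * real B * mu > 0"
  proof (cases "B = 0")
    case True then show ?thesis using lam_ge lam0_pos by simp
  next
    case False
    then have "real B * mu > 0" using mupos by simp
    moreover have "14 / Delta * (real B * mu) > 0" using Delta_pos \<open>real B * mu > 0\<close> by simp
    ultimately show ?thesis using lam_ge2 by (simp add: algebra_simps)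
  qed
  have par: "3 * lam + 3 * real B * mu \<le> (3 + Delta) * (lam - 3 * real B * mu)"
  proof -
    have "Delta * lam \<ge> Delta * ((3 + 14 / Delta) * real B * mu)"
      using lam_ge2 Delta_pos by simp
    also have "Delta * ((3 + 14 / Delta) * real B * mu) = 3 * Delta * (real B * mu) + 14 * (real B * mu)"
      using Delta_pos by (simp add: field_simps)
    finally have "Delta * lam \<ge> 3 * Delta * (real B * mu) + 14 * (real B * mu)" .
    moreover have "real B * mu \<ge> 0" using mupos by simp
    ultimately show ?thesis by (simp add: algebra_simps)
  qed
  have "(lam - 3 * real B * mu) * LC \<le> (lam - 3 * real B * mu) * ((3 + Delta) * LS)"
    using key A_ge mult_right_mono[OF par LS_ge] by (simp add: algebra_simps)
  then have cone: "LC \<le> (3 + Delta) * LS" using lamB by simp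
  have compat': "LS\<^sup>2 \<le> s * A / phi\<^sup>2"
  proof -
    have "LS\<^sup>2 \<le> s * ((?XA *v D) \<bullet> (?XA *v D)) / (?n * phi\<^sup>2)"
      using compat cone unfolding compatible_def LS_def LC_def s_def S_def by blast
    also have "\<dots> = s * A / phi\<^sup>2"
      unfolding A_def by (simp add: power2_norm_eq_inner)
    finally show ?thesis .
  qed
  define y where "y = 4 * lam\<^sup>2 * s / phi\<^sup>2"
  have y_ge: "y \<ge> 0" unfolding y_def using s_ge by simp
  have "(4 * lam * LS)\<^sup>2 = 16 * lam\<^sup>2 * LS\<^sup>2" by (simp add: power_mult_distrib)
  also have "\<dots> \<le> 16 * lam\<^sup>2 * (s * A / phi\<^sup>2)" using compat' by (intro mult_left_mono) auto
  also have "\<dots> = 4 * A * y" unfolding y_def by (simp add: field_simps)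
  also have "\<dots> \<le> (A + y)\<^sup>2"
  proof -
    have eq: "(A + y)\<^sup>2 = (A - y)\<^sup>2 + 4 * A * y" by (simp add: power2_eq_square algebra_simps)
    show ?thesis unfolding eq using zero_le_power2[of "A - y"] by linarith
  qed
  finally have "(4 * lam * LS)\<^sup>2 \<le> (A + y)\<^sup>2" .
  then have "4 * lam * LS \<le> A + y"
    by (rule power2_le_imp_le[OF _ add_nonneg_nonneg[OF A_ge y_ge]])
  moreover have "(lam - 3 * real B * mu) * L = (lam - 3 * real B * mu) * LS + (lam - 3 * real B * mu) * LC"
    unfolding L_split by (simp add: distrib_left)
  moreover have "(3 * lam + 3 * real B * mu) * LS + (lam - 3 * real B * mu) * LS = 4 * lam * LS"
    by (simp add: algebra_simps)
  ultimately have fin1: "A + (lam - 3 * real B * mu) * L \<le> y"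
    using key by linarith
  have "y \<le> s * (2 * lam + real B * mu)\<^sup>2 / phi\<^sup>2"
  proof -
    have "(2 * lam)\<^sup>2 \<le> (2 * lam + real B * mu)\<^sup>2"
      using lam_ge lam0_pos mupos by (intro power_mono) auto
    then have "s * (2 * lam)\<^sup>2 \<le> s * (2 * lam + real B * mu)\<^sup>2" using s_ge by (rule mult_left_mono)
    then have "s * (2 * lam)\<^sup>2 / phi\<^sup>2 \<le> s * (2 * lam + real B * mu)\<^sup>2 / phi\<^sup>2"
      by (rule divide_right_mono) simp
    moreover have "y = s * (2 * lam)\<^sup>2 / phi\<^sup>2" unfolding y_def by (simp add: power_mult_distrib)
    ultimately show ?thesis by simp
  qed
  then show ?thesis using fin1 unfolding A_def L_def D_def s_def S_def by linarith
qed

end
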